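(* Let $|\psi\rangle\in(\mathbb{C}^2)^{\otimes3}$ be the 3-qubit ring graph state, i.e. the (up to phase) unique state with $A_i|\psi\rangle=|\psi\rangle$ for $i=1,2,3$, where $A_i=Z_{i-1}X_iZ_{i+1}$ with indices taken cyclically ($Z_0=Z_3$, $Z_4=Z_1$). Fix $a\in(0,1/2)$ and let $h=h_1\otimes h_2\otimes h_3$ with $h_1=h_3=(\tfrac12\mathbb{1}+aZ)^{1/2}$ and $h_2=(\tfrac12\mathbb{1}+aX)^{1/2}$ (positive square roots), so that $h^\dagger h=(\tfrac12\mathbb{1}+aZ)\otimes(\tfrac12\mathbb{1}+aX)\otimes(\tfrac12\mathbb{1}+aZ)$. Then $|\psi\rangle$ can be transformed into the normalized state $h|\psi\rangle/\|h|\psi\rangle\|$ by a SEP map, but not by any $\mathrm{SEP}_1$ map.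
   Context: $X,Z$ are the Pauli matrices and $X_i,Z_i$ denote them acting on qubit $i$ (identity elsewhere). A CPTP map on $\mathcal{B}((\mathbb{C}^2)^{\otimes3})$ is in SEP if it admits a Kraus decomposition $\Lambda(\rho)=\sum_iK_i\rho K_i^\dagger$, $\sum_iK_i^\dagger K_i=\mathbb{1}$, with all Kraus operators of product form $K_i=K_i^{(1)}\otimes K_i^{(2)}\otimes K_i^{(3)}$, $K_i^{(j)}\in M(2,\mathbb{C})$; it is in $\mathrm{SEP}_1$ if such a decomposition exists with all $K_i^{(j)}\in GL(2,\mathbb{C})$. A transformation of $|\alpha\rangle$ into $|\beta\rangle$ means $\Lambda(|\alpha\rangle\langle\alpha|)=|\beta\rangle\langle\beta|$. *)

theory Defs
  imports "HOL-Analysis.Analysis"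
begin

text \<open>Single-qubit Hilbert space C^2 is indexed by bool (False = |0>, True = |1>);
  the 3-qubit space (C^2)^{tensor 3} is indexed by bool \<times> bool \<times> bool
  (first, second, third qubit).\<close>

type_synonym mat2 = "complex ^ bool ^ bool"
type_synonym idx3 = "bool \<times> bool \<times> bool"
type_synonym vec8 = "complex ^ idx3"
type_synonym mat8 = "complex ^ idx3 ^ idx3"

definition dagger :: "complex ^ 'n ^ 'm \<Rightarrow> complex ^ 'm ^ 'n" where
  "dagger A = (\<chi> i j. cnj (A $ j $ i))"

definition tensor3 :: "mat2 \<Rightarrow> mat2 \<Rightarrow> mat2 \<Rightarrow> mat8" where
  "tensor3 A B C = (\<chi> i j. A $ fst i $ fst j * B $ fst (snd i) $ fst (snd j)
                           * C $ snd (snd i) $ snd (snd j))"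

definition pauliX :: mat2 where
  "pauliX = (\<chi> i j. if i \<noteq> j then 1 else 0)"

definition pauliZ :: mat2 where
  "pauliZ = (\<chi> i j. if i = j then (if i then -1 else 1) else 0)"

definition on_qubit :: "nat \<Rightarrow> mat2 \<Rightarrow> mat8" where
  "on_qubit k P = (if k = 1 then tensor3 P (mat 1) (mat 1)
                   else if k = 2 then tensor3 (mat 1) P (mat 1)
                   else tensor3 (mat 1) (mat 1) P)"

definition stabA :: "nat \<Rightarrow> mat8" where
  "stabA i = (let prev = (if i = 1 then 3 else i - 1); next = (if i = 3 then 1 else i + 1)
              in on_qubit prev pauliZ ** on_qubit i pauliX ** on_qubit next pauliZ)"

definition proj :: "vec8 \<Rightarrow> mat8" where
  "proj a = (\<chi> i j. a $ i * cnj (a $ j))"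

definition hermitian :: "complex ^ 'n ^ 'n \<Rightarrow> bool" where
  "hermitian A \<longleftrightarrow> dagger A = A"

definition psd :: "complex ^ 'n ^ 'n \<Rightarrow> bool" where
  "psd A \<longleftrightarrow> hermitian A \<and> (\<forall>v. 0 \<le> Re (\<Sum>i\<in>UNIV. cnj (v $ i) * (A *v v) $ i))"

definition kraus_map :: "(mat2 \<times> mat2 \<times> mat2) list \<Rightarrow> mat8 \<Rightarrow> mat8" where
  "kraus_map Ks \<rho> = sum_list (map (\<lambda>(A, B, C). tensor3 A B C ** \<rho> ** dagger (tensor3 A B C)) Ks)"

definition kraus_complete :: "(mat2 \<times> mat2 \<times> mat2) list \<Rightarrow> bool" where
  "kraus_complete Ks \<longleftrightarrow>
     sum_list (map (\<lambda>(A, B, C). dagger (tensor3 A B C) ** tensor3 A B C) Ks) = mat 1"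

definition SEP :: "(mat8 \<Rightarrow> mat8) \<Rightarrow> bool" where
  "SEP \<Lambda> \<longleftrightarrow> (\<exists>Ks. kraus_complete Ks \<and> \<Lambda> = kraus_map Ks)"

definition SEP1 :: "(mat8 \<Rightarrow> mat8) \<Rightarrow> bool" where
  "SEP1 \<Lambda> \<longleftrightarrow> (\<exists>Ks. kraus_complete Ks \<and> \<Lambda> = kraus_map Ks \<and>
     (\<forall>(A, B, C) \<in> set Ks. invertible A \<and> invertible B \<and> invertible C))"

definition transforms :: "(mat8 \<Rightarrow> mat8) \<Rightarrow> vec8 \<Rightarrow> vec8 \<Rightarrow> bool" where
  "transforms \<Lambda> \<alpha> \<beta> \<longleftrightarrow> \<Lambda> (proj \<alpha>) = proj \<beta>"

end

theory Submission
  imports Defs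
begin


lemma UNIV_idx3: "(UNIV::idx3 set) = {(False,False,False),(False,False,True),(False,True,False),(False,True,True),
   (True,False,False),(True,False,True),(True,True,False),(True,True,True)}"
  by auto

lemma sum_idx3: "(\<Sum>j\<in>(UNIV::idx3 set). f j) = f (False,False,False) + f (False,False,True) + f (False,True,False) + f (False,True,True)
   + f (True,False,False) + f (True,False,True) + f (True,True,False) + f (True,True,True)"
  by (simp add: UNIV_idx3 algebra_simps)

lemma sum_bool: "(\<Sum>j\<in>(UNIV::bool set). f j) = f False + f True"
  by (simp add: UNIV_bool)

lemma tensor3_mult: "tensor3 A B C ** tensor3 A' B' C' = tensor3 (A ** A') (B ** B') (C ** C')"
  unfolding tensor3_def matrix_matrix_mult_def
  by (simp add: vec_eq_iff sum_idx3 sum_bool algebra_simps)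

lemma dagger_tensor3: "dagger (tensor3 A B C) = tensor3 (dagger A) (dagger B) (dagger C)"
  unfolding tensor3_def dagger_def by (simp add: vec_eq_iff)

lemma dagger_mult: "dagger (A ** B) = dagger B ** dagger A"
  unfolding dagger_def matrix_matrix_mult_def by (simp add: vec_eq_iff mult.commute)

lemma dagger_dagger: "dagger (dagger A) = A"
  unfolding dagger_def by (simp add: vec_eq_iff)



definition cinner :: "complex^'n \<Rightarrow> complex^'n \<Rightarrow> complex" where
  "cinner u w = (\<Sum>i\<in>UNIV. cnj (u$i) * w$i)"

definition Qf :: "complex^'n \<Rightarrow> complex^'n^'n \<Rightarrow> complex" where
  "Qf v M = cinner v (M *v v)"

lemma cinner_self: "cinner w w = of_real ((norm w)^2)"
proof -
  have "(norm w)^2 = (\<Sum>i\<in>UNIV. (cmod (w$i))^2)"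
    unfolding norm_vec_def L2_set_def by (simp add: sum_nonneg)
  then have "of_real ((norm w)^2) = (\<Sum>i\<in>UNIV. of_real ((cmod (w$i))^2) :: complex)"
    by simp
  also have "\<dots> = (\<Sum>i\<in>UNIV. cnj (w$i) * w$i)"
    by (rule sum.cong) (simp_all only: complex_norm_square mult.commute)
  finally show ?thesis unfolding cinner_def by simp
qed

lemma cinner_cnj: "cnj (cinner u w) = cinner w u"
  unfolding cinner_def by (simp add: mult.commute)

lemma cinner_add_right: "cinner u (w + w') = cinner u w + cinner u w'"
  unfolding cinner_def by (simp add: distrib_left sum.distrib)
lemma cinner_add_left: "cinner (u + u') w = cinner u w + cinner u' w"
  unfolding cinner_def by (simp add: distrib_right sum.distrib)
lemma cinner_diff_right: "cinner u (w - w') = cinner u w - cinner u w'"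
  unfolding cinner_def by (simp add: right_diff_distrib sum_subtractf)
lemma cinner_diff_left: "cinner (u - u') w = cinner u w - cinner u' w"
  unfolding cinner_def by (simp add: left_diff_distrib sum_subtractf)
lemma cinner_scale_right: "cinner u (c *s w) = c * cinner u w"
  unfolding cinner_def by (simp add: sum_distrib_left algebra_simps)
lemma cinner_scale_left: "cinner (c *s u) w = cnj c * cinner u w"
  unfolding cinner_def by (simp add: sum_distrib_left algebra_simps)

lemma cinner_zero_iff: "cinner w w = 0 \<longleftrightarrow> w = 0"
  by (simp add: cinner_self)

lemma Qf_add: "Qf v (A + B) = Qf v A + Qf v B"
  unfolding Qf_def by (simp add: matrix_vector_mult_add_rdistrib cinner_add_right)

lemma Qf_zero: "Qf v 0 = 0"
  unfolding Qf_def cinner_def by simp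

lemma Qf_sum_list: "Qf v (sum_list (map f xs)) = sum_list (map (\<lambda>x. Qf v (f x)) xs)"
  by (induction xs) (simp_all add: Qf_zero Qf_add)

lemma Qf_mat1: "Qf v (mat 1) = cinner v v"
  unfolding Qf_def by simp

lemma Qf_dagger: "Qf v (dagger K ** K) = cinner (K *v v) (K *v v)"
proof -
  have "Qf v (dagger K ** K) = (\<Sum>i\<in>UNIV. cnj (v$i) * (\<Sum>j\<in>UNIV. (\<Sum>k\<in>UNIV. cnj (K$k$i) * K$k$j) * v$j))"
    unfolding Qf_def cinner_def dagger_def matrix_matrix_mult_def matrix_vector_mult_def by simp
  also have "\<dots> = (\<Sum>i\<in>UNIV. \<Sum>j\<in>UNIV. \<Sum>k\<in>UNIV. cnj (v$i) * cnj (K$k$i) * (K$k$j * v$j))"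
    by (simp only: sum_distrib_left sum_distrib_right mult.assoc)
  also have "\<dots> = (\<Sum>i\<in>UNIV. \<Sum>k\<in>UNIV. \<Sum>j\<in>UNIV. cnj (v$i) * cnj (K$k$i) * (K$k$j * v$j))"
    by (rule sum.cong[OF refl], rule sum.swap)
  also have "\<dots> = (\<Sum>k\<in>UNIV. \<Sum>i\<in>UNIV. \<Sum>j\<in>UNIV. cnj (v$i) * cnj (K$k$i) * (K$k$j * v$j))"
    by (rule sum.swap)
  also have "\<dots> = (\<Sum>k\<in>UNIV. cnj (\<Sum>i\<in>UNIV. K$k$i * v$i) * (\<Sum>j\<in>UNIV. K$k$j * v$j))"
    by (simp only: cnj_sum complex_cnj_mult sum_distrib_left sum_distrib_right mult.commute mult.left_commute)
  also have "\<dots> = cinner (K *v v) (K *v v)"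
    unfolding cinner_def matrix_vector_mult_def by simp
  finally show ?thesis .
qed

lemma proj_conj: "K ** proj w ** dagger K = proj (K *v w)"
proof -
  have "(K ** proj w ** dagger K)$i$j = (K *v w)$i * cnj ((K *v w)$j)" for i j
  proof -
    have "(K ** proj w ** dagger K)$i$j = (\<Sum>k\<in>UNIV. (\<Sum>l\<in>UNIV. K$i$l * (w$l * cnj (w$k))) * cnj (K$j$k))"
      unfolding proj_def dagger_def matrix_matrix_mult_def by simp
    also have "\<dots> = (\<Sum>k\<in>UNIV. \<Sum>l\<in>UNIV. (K$i$l * w$l) * (cnj (K$j$k) * cnj (w$k)))"
      by (rule sum.cong[OF refl]) (simp add: sum_distrib_left sum_distrib_right mult_ac)
    also have "\<dots> = (\<Sum>l\<in>UNIV. \<Sum>k\<in>UNIV. (K$i$l * w$l) * (cnj (K$j$k) * cnj (w$k)))"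
      by (rule sum.swap)
    also have "\<dots> = (\<Sum>l\<in>UNIV. K$i$l * w$l) * (\<Sum>k\<in>UNIV. cnj (K$j$k) * cnj (w$k))"
      by (simp only: sum_product)
    also have "\<dots> = (K *v w)$i * cnj ((K *v w)$j)"
      unfolding matrix_vector_mult_def by simp
    finally show ?thesis .
  qed
  then show ?thesis unfolding proj_def by (simp add: vec_eq_iff)
qed

lemma Qf_proj: "Qf v (proj w) = cinner v w * cnj (cinner v w)"
proof -
  have "Qf v (proj w) = (\<Sum>i\<in>UNIV. cnj (v$i) * (\<Sum>j\<in>UNIV. w$i * cnj (w$j) * v$j))"
    unfolding Qf_def cinner_def proj_def matrix_vector_mult_def by simp
  also have "\<dots> = (\<Sum>i\<in>UNIV. \<Sum>j\<in>UNIV. (cnj (v$i) * w$i) * (cnj (w$j) * v$j))"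
    by (simp only: sum_distrib_left mult.assoc)
  also have "\<dots> = (\<Sum>i\<in>UNIV. cnj (v$i) * w$i) * (\<Sum>j\<in>UNIV. cnj (w$j) * v$j)"
    by (simp only: sum_product)
  also have "\<dots> = cinner v w * cnj (cinner v w)"
    unfolding cinner_def by (simp add: mult.commute)
  finally show ?thesis .
qed



lemma lin2:
  fixes xx yy p q u v :: complex
  assumes "xx*p + yy * u = 0" "xx*q + yy * v = 0" "p * v - q * u \<noteq> 0"
  shows "xx = 0 \<and> yy = 0"
proof -
  have "xx*(p * v - q * u) = v * (xx*p + yy * u) - u*(xx*q + yy * v)" by (simp add: algebra_simps)
  also have "\<dots> = 0" using assms by simp
  finally have xx: "xx = 0" using assms(3) by simp
  have "yy*(p * v - q * u) = p*(xx*q + yy * v) - q*(xx*p + yy * u)" by (simp add: algebra_simps)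
  also have "\<dots> = 0" using assms by simp
  finally have "yy = 0" using assms(3) by simp
  with xx show ?thesis by simp
qed

lemma scalar_key:
  fixes p1 q1 u1 v1 p2 q2 u2 v2 p3 q3 u3 v3 \<alpha> \<beta> :: complex
  assumes ab: "\<alpha> \<noteq> 0" "\<beta> \<noteq> 0"
    and d: "p1 * v1 - q1 * u1 \<noteq> 0" "p2 * v2 - q2 * u2 \<noteq> 0" "p3 * v3 - q3 * u3 \<noteq> 0"
    and E001: "\<alpha>*p1*p2*q3 + \<beta> * u1 * u2 * v3 = 0"
    and E010: "\<alpha>*p1*q2*p3 + \<beta> * u1 * v2 * u3 = 0"
    and E011: "\<alpha>*p1*q2*q3 + \<beta> * u1 * v2 * v3 = 0"
    and E100: "\<alpha>*q1*p2*p3 + \<beta> * v1 * u2 * u3 = 0"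
    and E101: "\<alpha>*q1*p2*q3 + \<beta> * v1 * u2 * v3 = 0"
    and E110: "\<alpha>*q1*q2*p3 + \<beta> * v1 * v2 * u3 = 0"
  shows "(q1=0\<and>q2=0\<and>q3=0\<and>u1=0\<and>u2=0\<and>u3=0) \<or> (p1=0\<and>p2=0\<and>p3=0\<and>v1=0\<and>v2=0\<and>v3=0)"
proof -
  have s1: "\<alpha>*p1*q2 = 0 \<and> \<beta> * u1 * v2 = 0"
    by (rule lin2[OF _ _ d(3)]) (use E010 E011 in \<open>simp_all add: algebra_simps\<close>)
  have s2: "\<alpha>*q1*p2 = 0 \<and> \<beta> * v1 * u2 = 0"
    by (rule lin2[OF _ _ d(3)]) (use E100 E101 in \<open>simp_all add: algebra_simps\<close>)
  have s3: "\<alpha>*p1*q3 = 0 \<and> \<beta> * u1 * v3 = 0"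
    by (rule lin2[OF _ _ d(2)]) (use E001 E011 in \<open>simp_all add: algebra_simps\<close>)
  have s4: "\<alpha>*q1*p3 = 0 \<and> \<beta> * v1 * u3 = 0"
    by (rule lin2[OF _ _ d(2)]) (use E100 E110 in \<open>simp_all add: algebra_simps\<close>)
  have s5: "\<alpha>*p2*q3 = 0 \<and> \<beta> * u2 * v3 = 0"
    by (rule lin2[OF _ _ d(1)]) (use E001 E101 in \<open>simp_all add: algebra_simps\<close>)
  have s6: "\<alpha>*q2*p3 = 0 \<and> \<beta> * v2 * u3 = 0"
    by (rule lin2[OF _ _ d(1)]) (use E010 E110 in \<open>simp_all add: algebra_simps\<close>)
  show ?thesis
  proof (cases "p1 = 0")
    case False
    then show ?thesis using s1 s2 s3 s4 s5 s6 ab d by auto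
  next
    case True
    then show ?thesis using s1 s2 s3 s4 s5 s6 ab d by auto
  qed
qed




definition mk2 :: "complex \<Rightarrow> complex \<Rightarrow> complex \<Rightarrow> complex \<Rightarrow> mat2" where
  "mk2 a b c d = (\<chi> i j. if i then (if j then d else c) else (if j then b else a))"

definition v8 :: "complex \<Rightarrow> complex \<Rightarrow> complex \<Rightarrow> complex \<Rightarrow> complex \<Rightarrow> complex \<Rightarrow> complex \<Rightarrow> complex \<Rightarrow> vec8" where
  "v8 c0 c1 c2 c3 c4 c5 c6 c7 = (\<chi> x. case x of (i,j,k) \<Rightarrow> if i then (if j then (if k then c7 else c6) else (if k then c5 else c4))
                                         else (if j then (if k then c3 else c2) else (if k then c1 else c0)))"

lemma mk2_nth [simp]: "mk2 a b c d $ False $ False = a" "mk2 a b c d $ False $ True = b"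
  "mk2 a b c d $ True $ False = c" "mk2 a b c d $ True $ True = d"
  unfolding mk2_def by simp_all

lemma v8_nth [simp]: "v8 c0 c1 c2 c3 c4 c5 c6 c7 $ (False,False,False) = c0"
  "v8 c0 c1 c2 c3 c4 c5 c6 c7 $ (False,False,True) = c1"
  "v8 c0 c1 c2 c3 c4 c5 c6 c7 $ (False,True,False) = c2"
  "v8 c0 c1 c2 c3 c4 c5 c6 c7 $ (False,True,True) = c3"
  "v8 c0 c1 c2 c3 c4 c5 c6 c7 $ (True,False,False) = c4"
  "v8 c0 c1 c2 c3 c4 c5 c6 c7 $ (True,False,True) = c5"
  "v8 c0 c1 c2 c3 c4 c5 c6 c7 $ (True,True,False) = c6"
  "v8 c0 c1 c2 c3 c4 c5 c6 c7 $ (True,True,True) = c7"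
  unfolding v8_def by simp_all

lemma all_bool2: "(\<forall>x::bool. P x) \<longleftrightarrow> P False \<and> P True"
  by (metis (full_types))

lemma all_idx3: "(\<forall>x::idx3. P x) \<longleftrightarrow> P (False,False,False) \<and> P (False,False,True) \<and> P (False,True,False) \<and> P (False,True,True)
   \<and> P (True,False,False) \<and> P (True,False,True) \<and> P (True,True,False) \<and> P (True,True,True)"
  unfolding split_paired_All all_bool2 by blast

lemma mat2_eq_iff: "(A::mat2) = B \<longleftrightarrow> A$False$False = B$False$False \<and> A$False$True = B$False$True \<and>
   A$True$False = B$True$False \<and> A$True$True = B$True$True"
  by (auto simp: vec_eq_iff all_bool2)

lemma vec8_eq_iff: "(v::vec8) = w \<longleftrightarrow> v$(False,False,False) = w$(False,False,False) \<and> v$(False,False,True) = w$(False,False,True) \<and>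
   v$(False,True,False) = w$(False,True,False) \<and> v$(False,True,True) = w$(False,True,True) \<and>
   v$(True,False,False) = w$(True,False,False) \<and> v$(True,False,True) = w$(True,False,True) \<and>
   v$(True,True,False) = w$(True,True,False) \<and> v$(True,True,True) = w$(True,True,True)"
  unfolding vec_eq_iff all_idx3 by simp

lemma vec8_expand: "(v::vec8) = v8 (v$(False,False,False)) (v$(False,False,True)) (v$(False,True,False)) (v$(False,True,True))
   (v$(True,False,False)) (v$(True,False,True)) (v$(True,True,False)) (v$(True,True,True))"
  by (simp add: vec8_eq_iff)

lemma mat8_eq_iff: "(A::mat8) = B \<longleftrightarrow> (\<forall>i. A$i = B$i)"
  by (simp add: vec_eq_iff)

lemma mk2_eq: "(M::mat2) = mk2 (M$False$False) (M$False$True) (M$True$False) (M$True$True)"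
  by (simp add: mat2_eq_iff)

lemma mk2_mult: "mk2 a b c d ** mk2 a' b' c' d' = mk2 (a*a'+b*c') (a*b'+b*d') (c*a'+d*c') (c*b'+d*d')"
  by (simp add: mat2_eq_iff matrix_matrix_mult_def sum_bool)

lemma mk2_dagger: "dagger (mk2 a b c d) = mk2 (cnj a) (cnj c) (cnj b) (cnj d)"
  by (simp add: mat2_eq_iff dagger_def)

lemma mat1_mk2: "(mat 1 :: mat2) = mk2 1 0 0 1"
  by (simp add: mat2_eq_iff mat_def)

lemma pauliX_mk2: "pauliX = mk2 0 1 1 0"
  by (simp add: mat2_eq_iff pauliX_def)

lemma pauliZ_mk2: "pauliZ = mk2 1 0 0 (-1)"
  by (simp add: mat2_eq_iff pauliZ_def)

lemma mk2_add: "mk2 a b c d + mk2 a' b' c' d' = mk2 (a+a') (b+b') (c+c') (d+d')"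
  by (simp add: mat2_eq_iff)

lemma mk2_scaleR: "r *\<^sub>R mk2 a b c d = mk2 (r*\<^sub>Ra) (r*\<^sub>Rb) (r*\<^sub>Rc) (r*\<^sub>Rd)"
  by (simp add: mat2_eq_iff)

lemma tensor3_nth: "tensor3 A B C $ (i1,i2,i3) $ (j1,j2,j3) = A$i1$j1 * B$i2$j2 * C$i3$j3"
  by (simp add: tensor3_def)

lemma stab_forms: "stabA 1 = tensor3 pauliX pauliZ pauliZ" "stabA 2 = tensor3 pauliZ pauliX pauliZ"
  "stabA 3 = tensor3 pauliZ pauliZ pauliX"
  unfolding stabA_def on_qubit_def by (simp_all add: tensor3_mult)

definition gvec :: vec8 where "gvec = v8 1 1 1 (-1) 1 (-1) (-1) (-1)"



lemma tensor3_v8: "tensor3 (mk2 a1 b1 c1 d1) (mk2 a2 b2 c2 d2) (mk2 a3 b3 c3 d3) *v v8 x0 x1 x2 x3 x4 x5 x6 x7 = v8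
  (a1*a2*a3*x0 + a1*a2*b3*x1 + a1*b2*a3*x2 + a1*b2*b3*x3 + b1*a2*a3*x4 + b1*a2*b3*x5 + b1*b2*a3*x6 + b1*b2*b3*x7)
  (a1*a2*c3*x0 + a1*a2*d3*x1 + a1*b2*c3*x2 + a1*b2*d3*x3 + b1*a2*c3*x4 + b1*a2*d3*x5 + b1*b2*c3*x6 + b1*b2*d3*x7)
  (a1*c2*a3*x0 + a1*c2*b3*x1 + a1*d2*a3*x2 + a1*d2*b3*x3 + b1*c2*a3*x4 + b1*c2*b3*x5 + b1*d2*a3*x6 + b1*d2*b3*x7)
  (a1*c2*c3*x0 + a1*c2*d3*x1 + a1*d2*c3*x2 + a1*d2*d3*x3 + b1*c2*c3*x4 + b1*c2*d3*x5 + b1*d2*c3*x6 + b1*d2*d3*x7)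
  (c1*a2*a3*x0 + c1*a2*b3*x1 + c1*b2*a3*x2 + c1*b2*b3*x3 + d1*a2*a3*x4 + d1*a2*b3*x5 + d1*b2*a3*x6 + d1*b2*b3*x7)
  (c1*a2*c3*x0 + c1*a2*d3*x1 + c1*b2*c3*x2 + c1*b2*d3*x3 + d1*a2*c3*x4 + d1*a2*d3*x5 + d1*b2*c3*x6 + d1*b2*d3*x7)
  (c1*c2*a3*x0 + c1*c2*b3*x1 + c1*d2*a3*x2 + c1*d2*b3*x3 + d1*c2*a3*x4 + d1*c2*b3*x5 + d1*d2*a3*x6 + d1*d2*b3*x7)
  (c1*c2*c3*x0 + c1*c2*d3*x1 + c1*d2*c3*x2 + c1*d2*d3*x3 + d1*c2*c3*x4 + d1*c2*d3*x5 + d1*d2*c3*x6 + d1*d2*d3*x7)"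
  unfolding matrix_vector_mult_def
  by (simp add: vec8_eq_iff tensor3_def sum_idx3)



lemma v8_eq_iff: "v8 a0 a1 a2 a3 a4 a5 a6 a7 = v8 b0 b1 b2 b3 b4 b5 b6 b7 \<longleftrightarrow>
  a0 = b0 \<and> a1 = b1 \<and> a2 = b2 \<and> a3 = b3 \<and> a4 = b4 \<and> a5 = b5 \<and> a6 = b6 \<and> a7 = b7"
  by (simp only: vec8_eq_iff v8_nth)

lemma XZZ_v8: "tensor3 pauliX pauliZ pauliZ *v v8 x0 x1 x2 x3 x4 x5 x6 x7 = v8 x4 (-x5) (-x6) x7 x0 (-x1) (-x2) x3"
  unfolding pauliX_mk2 pauliZ_mk2 tensor3_v8 by simp
lemma ZXZ_v8: "tensor3 pauliZ pauliX pauliZ *v v8 x0 x1 x2 x3 x4 x5 x6 x7 = v8 x2 (-x3) x0 (-x1) (-x6) x7 (-x4) x5"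
  unfolding pauliX_mk2 pauliZ_mk2 tensor3_v8 by simp
lemma ZZX_v8: "tensor3 pauliZ pauliZ pauliX *v v8 x0 x1 x2 x3 x4 x5 x6 x7 = v8 x1 x0 (-x3) (-x2) (-x5) (-x4) x7 x6"
  unfolding pauliX_mk2 pauliZ_mk2 tensor3_v8 by simp

lemma psi_form:
  assumes "\<forall>i\<in>{1,2,3}. stabA i *v \<psi> = \<psi>"
  shows "\<psi> = (\<psi>$(False,False,False)) *s gvec"
proof -
  have s1: "tensor3 pauliX pauliZ pauliZ *v \<psi> = \<psi>" and s2: "tensor3 pauliZ pauliX pauliZ *v \<psi> = \<psi>"
    and s3: "tensor3 pauliZ pauliZ pauliX *v \<psi> = \<psi>"
    using assms stab_forms by simp_all
  obtain x0 x1 x2 x3 x4 x5 x6 x7 where e: "\<psi> = v8 x0 x1 x2 x3 x4 x5 x6 x7"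
    using vec8_expand by blast
  from s1 have a: "x4 = x0" "-x5 = x1" "-x6 = x2" "x7 = x3"
    unfolding e XZZ_v8 v8_eq_iff by blast+
  from s2 have b: "x2 = x0"
    unfolding e ZXZ_v8 v8_eq_iff by blast+
  from s3 have c: "x1 = x0" "-x3 = x2"
    unfolding e ZZX_v8 v8_eq_iff by blast+
  have "x3 = -x0" "x5 = -x0" "x6 = -x0" "x7 = -x0"
    using a b c by (metis minus_minus)+
  then show ?thesis unfolding e gvec_def using a b c
    by (simp add: vec8_eq_iff)
qed



definition vt :: "complex^bool \<Rightarrow> complex^bool \<Rightarrow> complex^bool \<Rightarrow> vec8" where
  "vt u v w = (\<chi> x. u$fst x * v$fst (snd x) * w$snd (snd x))"

definition lin :: "complex^bool \<Rightarrow> complex^bool \<Rightarrow> complex" where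
  "lin r u = r$False * u$False + r$True * u$True"

definition trip :: "complex^bool \<Rightarrow> complex^bool \<Rightarrow> complex^bool \<Rightarrow> vec8 \<Rightarrow> complex" where
  "trip r1 r2 r3 w = (\<Sum>x\<in>UNIV. r1$fst x * r2$fst (snd x) * r3$snd (snd x) * w$x)"

definition v2 :: "complex \<Rightarrow> complex \<Rightarrow> complex^bool" where
  "v2 x y = (\<chi> i. if i then y else x)"

lemma v2_nth [simp]: "v2 x y $ False = x" "v2 x y $ True = y"
  unfolding v2_def by simp_all

lemma vec2_eq_iff: "(u::complex^bool) = w \<longleftrightarrow> u$False = w$False \<and> u$True = w$True"
  by (auto simp: vec_eq_iff all_bool2)

definition ee :: "complex^bool" where "ee = v2 1 \<i>"
definition ff :: "complex^bool" where "ff = v2 1 (-\<i>)"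
definition EE :: "complex^bool" where "EE = v2 (1/2) (-\<i>/2)"
definition FF :: "complex^bool" where "FF = v2 (1/2) (\<i>/2)"

lemma lin_basis [simp]: "lin EE ee = 1" "lin EE ff = 0" "lin FF ee = 0" "lin FF ff = 1"
  unfolding lin_def EE_def FF_def ee_def ff_def by (simp_all add: field_simps)

lemma decomp: "u = lin EE u *s ee + lin FF u *s ff"
  unfolding lin_def EE_def FF_def ee_def ff_def by (simp add: vec2_eq_iff field_simps)

lemma tensor3_vt: "tensor3 A B C *v vt u v w = vt (A *v u) (B *v v) (C *v w)"
  unfolding matrix_vector_mult_def vt_def tensor3_def
  by (simp add: vec_eq_iff sum_idx3 sum_bool algebra_simps)

lemma trip_vt: "trip r1 r2 r3 (vt u v w) = lin r1 u * lin r2 v * lin r3 w"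
  unfolding trip_def vt_def lin_def
  by (simp add: sum_idx3 algebra_simps)

lemma trip_add: "trip r1 r2 r3 (x + y) = trip r1 r2 r3 x + trip r1 r2 r3 y"
  unfolding trip_def by (simp add: sum.distrib algebra_simps)

lemma trip_smult: "trip r1 r2 r3 (c *s x) = c * trip r1 r2 r3 x"
  unfolding trip_def by (simp add: sum_distrib_left algebra_simps)

lemma vt_smult: "vt (c *s u) v w = c *s vt u v w" "vt u (c *s v) w = c *s vt u v w" "vt u v (c *s w) = c *s vt u v w"
  unfolding vt_def by (simp_all add: vec_eq_iff algebra_simps)

lemma mv_smult: "(A::complex^'n^'m) *v (c *s x) = c *s (A *v x)"
  unfolding matrix_vector_mult_def
  by (simp add: vec_eq_iff sum_distrib_left) (auto intro!: sum.cong simp: mult_ac)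

lemma mv_add: "A *v (x + y) = A *v x + A *v y"
  by (simp add: matrix_vector_right_distrib)

definition \<alpha>c :: complex where "\<alpha>c = (1 - \<i>)/2"
definition \<beta>c :: complex where "\<beta>c = (1 + \<i>)/2"

definition gpvec :: vec8 where "gpvec = v8 1 (-1) (-1) (-1) (-1) (-1) (-1) 1"

lemma gvec_vt: "gvec = \<alpha>c *s vt ee ee ee + \<beta>c *s vt ff ff ff"
  unfolding gvec_def \<alpha>c_def \<beta>c_def vt_def ee_def ff_def
  by (simp add: vec8_eq_iff field_simps)

lemma gpvec_vt: "gpvec = \<beta>c *s vt ee ee ee + \<alpha>c *s vt ff ff ff"
  unfolding gpvec_def \<alpha>c_def \<beta>c_def vt_def ee_def ff_def
  by (simp add: vec8_eq_iff field_simps)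

lemma det_nz:
  assumes "M ** mk2 a b c d = mat 1"
  shows "a*d - b*c \<noteq> 0"
proof
  assume z: "a*d - b*c = 0"
  have k: "w = 0" if "mk2 a b c d *v w = 0" for w
  proof -
    have "w = M *v (mk2 a b c d *v w)" using assms by (simp add: matrix_vector_mul_assoc)
    then show ?thesis using that by simp
  qed
  have "mk2 a b c d *v v2 d (-c) = 0" using z
    by (simp add: vec2_eq_iff matrix_vector_mult_def sum_bool algebra_simps)
  then have "v2 d (-c) = 0" by (rule k)
  then have cd: "c = 0" "d = 0" by (simp_all add: vec2_eq_iff)
  have "mk2 a b c d *v v2 b (-a) = 0" using z
    by (simp add: vec2_eq_iff matrix_vector_mult_def sum_bool algebra_simps)
  then have "v2 b (-a) = 0" by (rule k)
  then have ab: "a = 0" "b = 0" by (simp_all add: vec2_eq_iff)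
  have "mk2 a b c d *v v2 1 0 = 0" using ab cd
    by (simp add: vec2_eq_iff matrix_vector_mult_def sum_bool)
  then have "v2 1 0 = (0::complex^bool)" by (rule k)
  then show False by (simp add: vec2_eq_iff)
qed

lemma det_pquv:
  "lin EE (mk2 a b c d *v ee) * lin FF (mk2 a b c d *v ff) - lin FF (mk2 a b c d *v ee) * lin EE (mk2 a b c d *v ff) = a*d - b*c"
  unfolding lin_def EE_def FF_def ee_def ff_def matrix_vector_mult_def
  by (simp add: sum_bool field_simps)

lemma det_G:
  assumes "M ** G = mat 1"
  shows "lin EE (G *v ee) * lin FF (G *v ff) - lin FF (G *v ee) * lin EE (G *v ff) \<noteq> 0"
  using det_nz[of M] det_pquv assms mk2_eq[of G] by metis



lemma smult_smult: "(a::complex) *s (b *s x) = (a * b) *s (x::complex^'n)"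
  by (simp add: vec_eq_iff)

lemma key_sym:
  fixes G1 G2 G3 :: mat2
  assumes M: "M1 ** G1 = mat 1" "M2 ** G2 = mat 1" "M3 ** G3 = mat 1"
    and S: "tensor3 G1 G2 G3 *v gvec = c *s gvec"
  shows "tensor3 G1 G2 G3 *v gpvec = c *s gpvec \<or> tensor3 G1 G2 G3 *v gpvec = (-c) *s gpvec"
proof -
  define p1 where "p1 = lin EE (G1 *v ee)"
  define q1 where "q1 = lin FF (G1 *v ee)"
  define u1 where "u1 = lin EE (G1 *v ff)"
  define v1 where "v1 = lin FF (G1 *v ff)"
  define p2 where "p2 = lin EE (G2 *v ee)"
  define q2 where "q2 = lin FF (G2 *v ee)"
  define u2 where "u2 = lin EE (G2 *v ff)"
  define vv2 where "vv2 = lin FF (G2 *v ff)"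
  define p3 where "p3 = lin EE (G3 *v ee)"
  define q3 where "q3 = lin FF (G3 *v ee)"
  define u3 where "u3 = lin EE (G3 *v ff)"
  define v3 where "v3 = lin FF (G3 *v ff)"
  note defs = p1_def q1_def u1_def v1_def p2_def q2_def u2_def vv2_def p3_def q3_def u3_def v3_def
  have G1e: "G1 *v ee = p1 *s ee + q1 *s ff" and G1f: "G1 *v ff = u1 *s ee + v1 *s ff"
    and G2e: "G2 *v ee = p2 *s ee + q2 *s ff" and G2f: "G2 *v ff = u2 *s ee + vv2 *s ff"
    and G3e: "G3 *v ee = p3 *s ee + q3 *s ff" and G3f: "G3 *v ff = u3 *s ee + v3 *s ff"
    unfolding defs by (rule decomp)+
  have Tg: "tensor3 G1 G2 G3 *v gvec = \<alpha>c *s vt (G1 *v ee) (G2 *v ee) (G3 *v ee) + \<beta>c *s vt (G1 *v ff) (G2 *v ff) (G3 *v ff)"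
    unfolding gvec_vt mv_add mv_smult tensor3_vt ..
  have Tgp: "tensor3 G1 G2 G3 *v gpvec = \<beta>c *s vt (G1 *v ee) (G2 *v ee) (G3 *v ee) + \<alpha>c *s vt (G1 *v ff) (G2 *v ff) (G3 *v ff)"
    unfolding gpvec_vt mv_add mv_smult tensor3_vt ..
  have eq: "\<alpha>c * (lin r1 (G1 *v ee) * lin r2 (G2 *v ee) * lin r3 (G3 *v ee)) + \<beta>c * (lin r1 (G1 *v ff) * lin r2 (G2 *v ff) * lin r3 (G3 *v ff))
     = c * (\<alpha>c * (lin r1 ee * lin r2 ee * lin r3 ee) + \<beta>c * (lin r1 ff * lin r2 ff * lin r3 ff))" for r1 r2 r3
  proof -
    have "trip r1 r2 r3 (tensor3 G1 G2 G3 *v gvec) = trip r1 r2 r3 (c *s gvec)" using S by simp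
    then show ?thesis unfolding Tg by (simp only: trip_add trip_smult trip_vt gvec_vt)
  qed
  have ab: "\<alpha>c \<noteq> 0" "\<beta>c \<noteq> 0" unfolding \<alpha>c_def \<beta>c_def by (simp_all add: complex_eq_iff)
  have E000: "\<alpha>c*p1*p2*p3 + \<beta>c*u1*u2*u3 = c*\<alpha>c" using eq[of EE EE EE] by (simp add: defs mult.assoc)
  have E111: "\<alpha>c*q1*q2*q3 + \<beta>c* v1* vv2* v3 = c*\<beta>c" using eq[of FF FF FF] by (simp add: defs mult.assoc)
  have E001: "\<alpha>c*p1*p2*q3 + \<beta>c*u1*u2* v3 = 0" using eq[of EE EE FF] by (simp add: defs mult.assoc)
  have E010: "\<alpha>c*p1*q2*p3 + \<beta>c*u1* vv2*u3 = 0" using eq[of EE FF EE] by (simp add: defs mult.assoc)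
  have E011: "\<alpha>c*p1*q2*q3 + \<beta>c*u1* vv2* v3 = 0" using eq[of EE FF FF] by (simp add: defs mult.assoc)
  have E100: "\<alpha>c*q1*p2*p3 + \<beta>c* v1*u2*u3 = 0" using eq[of FF EE EE] by (simp add: defs mult.assoc)
  have E101: "\<alpha>c*q1*p2*q3 + \<beta>c* v1*u2* v3 = 0" using eq[of FF EE FF] by (simp add: defs mult.assoc)
  have E110: "\<alpha>c*q1*q2*p3 + \<beta>c* v1* vv2*u3 = 0" using eq[of FF FF EE] by (simp add: defs mult.assoc)
  have d: "p1* v1 - q1*u1 \<noteq> 0" "p2* vv2 - q2*u2 \<noteq> 0" "p3* v3 - q3*u3 \<noteq> 0"
    unfolding defs using det_G M by blast+
  from scalar_key[OF ab d E001 E010 E011 E100 E101 E110]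
  show ?thesis
  proof
    assume z: "q1=0\<and>q2=0\<and>q3=0\<and>u1=0\<and>u2=0\<and>u3=0"
    have pc: "p1*p2*p3 = c" using E000 z ab by (simp add: mult.assoc)
    have vc: "v1* vv2* v3 = c" using E111 z ab by (simp add: mult.assoc)
    have "tensor3 G1 G2 G3 *v gpvec = (p1*p2*p3 * \<beta>c) *s vt ee ee ee + (v1 * vv2 * v3 * \<alpha>c) *s vt ff ff ff"
      unfolding Tgp G1e G1f G2e G2f G3e G3f using z
      by (simp add: vt_smult smult_smult mult_ac)
    also have "\<dots> = c *s gpvec"
      unfolding pc vc gpvec_vt by (simp add: smult_smult vector_add_ldistrib mult_ac)
    finally have "tensor3 G1 G2 G3 *v gpvec = c *s gpvec" .
    then show ?thesis ..
  next
    assume z: "p1=0\<and>p2=0\<and>p3=0\<and>v1=0\<and>vv2=0\<and>v3=0"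
    have uc: "\<beta>c*(u1*u2*u3) = c*\<alpha>c" using E000 z by (simp add: mult.assoc)
    have qc: "\<alpha>c*(q1*q2*q3) = c*\<beta>c" using E111 z by (simp add: mult.assoc)
    have sq: "\<alpha>c * \<alpha>c = - (\<beta>c * \<beta>c)" unfolding \<alpha>c_def \<beta>c_def by (simp add: field_simps)
    have sq2: "\<beta>c * \<beta>c = - (\<alpha>c * \<alpha>c)" using sq by simp
    have uc': "u1*u2*u3 * \<alpha>c = -c * \<beta>c"
    proof -
      have "\<beta>c * (u1*u2*u3 * \<alpha>c) = c * (\<alpha>c * \<alpha>c)" using uc by (simp add: mult_ac)
      also have "\<dots> = \<beta>c * (-c * \<beta>c)" using sq by (simp add: mult_ac)
      finally show ?thesis using mult_left_cancel[OF ab(2)] by blast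
    qed
    have qc': "q1*q2*q3 * \<beta>c = -c * \<alpha>c"
    proof -
      have "\<alpha>c * (q1*q2*q3 * \<beta>c) = c * (\<beta>c * \<beta>c)" using qc by (simp add: mult_ac)
      also have "\<dots> = \<alpha>c * (-c * \<alpha>c)" unfolding sq2 by (simp add: algebra_simps)
      finally show ?thesis using mult_left_cancel[OF ab(1)] by blast
    qed
    have "tensor3 G1 G2 G3 *v gpvec = (q1*q2*q3 * \<beta>c) *s vt ff ff ff + (u1*u2*u3 * \<alpha>c) *s vt ee ee ee"
      unfolding Tgp G1e G1f G2e G2f G3e G3f using z
      by (simp add: vt_smult smult_smult mult_ac)
    also have "\<dots> = (-c) *s gpvec"
      unfolding qc' uc' gpvec_vt by (simp add: smult_smult vector_add_ldistrib mult_ac add.commute)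
    finally show ?thesis ..
  qed
qed



definition Hz :: "real \<Rightarrow> mat2" where "Hz a = mk2 (1/2 + of_real a) 0 0 (1/2 - of_real a)"
definition Hx :: "real \<Rightarrow> mat2" where "Hx a = mk2 (1/2) (of_real a) (of_real a) (1/2)"

lemma Hz_eq: "(1/2) *\<^sub>R mat 1 + a *\<^sub>R pauliZ = Hz a"
  by (simp add: Hz_def mat2_eq_iff mat_def pauliZ_def) (simp add: scaleR_conv_of_real)
lemma Hx_eq: "(1/2) *\<^sub>R mat 1 + a *\<^sub>R pauliX = Hx a"
  by (simp add: Hx_def mat2_eq_iff mat_def pauliX_def) (simp add: scaleR_conv_of_real)


lemma Qf_g: "Qf gvec (tensor3 (Hz a) (Hx a) (Hz a)) = 1 + 8 * of_real a ^ 3"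
  unfolding Qf_def cinner_def gvec_def Hz_def Hx_def tensor3_v8
  by (simp add: sum_idx3 algebra_simps power3_eq_cube)

lemma Qf_gp: "Qf gpvec (tensor3 (Hz a) (Hx a) (Hz a)) = 1 - 8 * of_real a ^ 3"
  unfolding Qf_def cinner_def gpvec_def Hz_def Hx_def tensor3_v8
  by (simp add: sum_idx3 algebra_simps power3_eq_cube)

lemma cinner_g: "cinner gvec gvec = 8" "cinner gpvec gpvec = 8"
  unfolding cinner_def gvec_def gpvec_def by (simp_all add: sum_idx3)



lemma Qf_smult: "Qf (c *s v) M = cnj c * c * Qf v M"
  unfolding Qf_def by (simp add: mv_smult cinner_scale_left cinner_scale_right mult.assoc)

lemma scaleR_smult: "r *\<^sub>R (v::complex^'n) = of_real r *s v"
  by (simp add: vec_eq_iff) (simp add: scaleR_conv_of_real)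

lemma smult_cancel: "(c::complex) \<noteq> 0 \<Longrightarrow> c *s u = c *s w \<Longrightarrow> u = (w::complex^'n)"
  by (simp add: vec_eq_iff)

lemma tensor3_id: "tensor3 (mat 1) (mat 1) (mat 1) = mat 1"
  by (simp add: tensor3_def mat_def vec_eq_iff)

lemma sum_list_diff: "sum_list (map (\<lambda>x. f x - g x) xs) = sum_list (map f xs) - sum_list (map g xs)"
  for f g :: "'a \<Rightarrow> 'b::ab_group_add"
  by (induction xs) simp_all

lemma Re_sum_list: "Re (sum_list (map f xs)) = sum_list (map (\<lambda>x. Re (f x)) xs)"
  by (induction xs) simp_all

lemma sum_list_pos: "xs \<noteq> [] \<Longrightarrow> (\<forall>x\<in>set xs. 0 < f x) \<Longrightarrow> 0 < sum_list (map f xs)"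
  for f :: "'a \<Rightarrow> real"
proof (induction xs)
  case Nil then show ?case by simp
next
  case (Cons y ys)
  show ?case
  proof (cases "ys = []")
    case True then show ?thesis using Cons by simp
  next
    case False then show ?thesis using Cons by (simp add: add_pos_pos)
  qed
qed

lemma mat8_ne: "(0::mat8) \<noteq> mat 1"
proof
  assume "(0::mat8) = mat 1"
  then have "(0::mat8) $ (False,False,False) $ (False,False,False) = mat 1 $ (False,False,False) $ (False,False,False)" by simp
  then show False by (simp add: mat_def)
qed

lemma rank1:
  assumes out: "sum_list (map (\<lambda>(A,B,C). proj (tensor3 A B C *v \<psi>)) Ks) = proj \<beta>"
    and nb: "cinner \<beta> \<beta> = 1"
    and mem: "(A,B,C) \<in> set Ks"
  shows "tensor3 A B C *v \<psi> = cinner \<beta> (tensor3 A B C *v \<psi>) *s \<beta>"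
proof -
  define w where "w = tensor3 A B C *v \<psi>"
  define k where "k = cinner \<beta> w"
  define v where "v = w - k *s \<beta>"
  have vb: "cinner v \<beta> = 0"
    unfolding v_def k_def by (simp add: cinner_diff_left cinner_scale_left cinner_cnj nb)
  have "Qf v (proj \<beta>) = 0" unfolding Qf_proj vb by simp
  then have "Qf v (sum_list (map (\<lambda>(A,B,C). proj (tensor3 A B C *v \<psi>)) Ks)) = 0" using out by simp
  then have "sum_list (map (\<lambda>x. Qf v ((\<lambda>(A,B,C). proj (tensor3 A B C *v \<psi>)) x)) Ks) = 0"
    by (simp add: Qf_sum_list)
  then have "Re (sum_list (map (\<lambda>x. Qf v ((\<lambda>(A,B,C). proj (tensor3 A B C *v \<psi>)) x)) Ks)) = 0" by simp
  then have s0: "sum_list (map (\<lambda>x. Re (Qf v ((\<lambda>(A,B,C). proj (tensor3 A B C *v \<psi>)) x))) Ks) = 0"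
    by (simp add: Re_sum_list)
  have nn: "\<forall>y\<in>set (map (\<lambda>x. Re (Qf v ((\<lambda>(A,B,C). proj (tensor3 A B C *v \<psi>)) x))) Ks). 0 \<le> y"
  proof
    fix y assume "y \<in> set (map (\<lambda>x. Re (Qf v ((\<lambda>(A,B,C). proj (tensor3 A B C *v \<psi>)) x))) Ks)"
    then obtain x where "y = Re (Qf v ((\<lambda>(A,B,C). proj (tensor3 A B C *v \<psi>)) x))" by auto
    then obtain A' B' C' where y: "y = Re (Qf v (proj (tensor3 A' B' C' *v \<psi>)))"
      by (cases x) auto
    show "0 \<le> y" unfolding y Qf_proj
      by (simp add: complex_mult_cnj)
  qed
  have "Re (Qf v (proj w)) \<in> set (map (\<lambda>x. Re (Qf v ((\<lambda>(A,B,C). proj (tensor3 A B C *v \<psi>)) x))) Ks)"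
    using mem unfolding w_def by force
  then have "Re (Qf v (proj w)) = 0" using s0 nn sum_list_nonneg_eq_0_iff by blast
  then have "Re (cinner v w * cnj (cinner v w)) = 0" unfolding Qf_proj .
  then have vw: "cinner v w = 0"
    by (simp add: complex_mult_cnj) (metis complex_eq_iff zero_complex.sel power2_eq_square
       sum_power2_eq_zero_iff)
  have "cinner v v = 0" unfolding v_def[of] 
    by (simp add: cinner_diff_right cinner_scale_right vw[unfolded v_def] vb[unfolded v_def])
  then have "v = 0" by (simp add: cinner_zero_iff)
  then show ?thesis unfolding v_def k_def w_def by simp
qed



lemma Hz_inv: assumes "0 < a" "a < 1/2" shows "Hz a ** mk2 (1/(1/2 + of_real a)) 0 0 (1/(1/2 - of_real a)) = mat 1"
proof -
  have n1: "(1/2 + complex_of_real a) \<noteq> 0" using assms by (simp add: complex_eq_iff)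
  have n2: "(1/2 - complex_of_real a) \<noteq> 0" using assms by (simp add: complex_eq_iff)
  show ?thesis unfolding Hz_def mk2_mult mat1_mk2 using n1 n2 by simp
qed

lemma Hx_inv: assumes "0 < a" "a < 1/2"
  shows "Hx a ** mk2 (1/2 / (1/4 - of_real a ^ 2)) (- of_real a / (1/4 - of_real a ^ 2)) (- of_real a / (1/4 - of_real a ^ 2)) (1/2 / (1/4 - of_real a ^ 2)) = mat 1"
proof -
  have r: "1/4 - a^2 > 0" using assms power_strict_mono[of a "1/2" 2] by (simp add: power_divide)
  have e: "(1/4 - complex_of_real a ^ 2) = of_real (1/4 - a^2)" by simp
  have n: "(1/4 - complex_of_real a ^ 2) \<noteq> 0" unfolding e of_real_eq_0_iff using r by linarith
  define d where "d = (1/4 - complex_of_real a ^ 2)"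
  have e1: "1/2 * (1/2/d) + of_real a * (- of_real a / d) = 1"
    using n unfolding d_def by (simp add: divide_simps power2_eq_square)
  have e2: "1/2 * (- of_real a/d) + of_real a * (1/2 / d) = 0"
    by (simp add: divide_simps algebra_simps)
  have e3: "of_real a * (1/2/d) + 1/2 * (- of_real a / d) = 0"
    by (simp add: divide_simps algebra_simps)
  have e4: "of_real a * (- of_real a/d) + 1/2 * (1/2 / d) = 1"
    using e1 by (simp add: algebra_simps)
  show ?thesis unfolding Hx_def mk2_mult mat1_mk2 d_def[symmetric] e1 e2 e3 e4 ..
qed

lemma h_inv:
  fixes h :: mat2
  assumes "h ** h = Hm" "Hm ** Hi = mat 1"
  shows "\<exists>N. h ** N = mat 1 \<and> N ** h = mat 1"
proof -
  have "h ** (h ** Hi) = mat 1" using assms by (simp add: matrix_mul_assoc)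
  then show ?thesis using matrix_left_right_inverse by blast
qed

lemma psd_dagger: "psd h \<Longrightarrow> dagger h = h"
  unfolding psd_def hermitian_def by simp



lemma not_sep1:
  fixes a :: real and \<psi> :: vec8 and h1 h2 h3 :: mat2
  assumes a: "0 < a" "a < 1/2"
    and psi_norm: "norm \<psi> = 1"
    and psi_stab: "\<forall>i\<in>{1,2,3}. stabA i *v \<psi> = \<psi>"
    and h1: "psd h1" "h1 ** h1 = Hz a"
    and h2: "psd h2" "h2 ** h2 = Hx a"
    and h3: "psd h3" "h3 ** h3 = Hz a"
  shows "\<not> (\<exists>\<Lambda>. SEP1 \<Lambda> \<and> transforms \<Lambda> \<psi>
            (inverse (norm (tensor3 h1 h2 h3 *v \<psi>)) *\<^sub>R (tensor3 h1 h2 h3 *v \<psi>)))"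
proof
  define hh where "hh = tensor3 h1 h2 h3"
  define n where "n = norm (hh *v \<psi>)"
  define \<beta> where "\<beta> = inverse n *\<^sub>R (hh *v \<psi>)"
  assume "\<exists>\<Lambda>. SEP1 \<Lambda> \<and> transforms \<Lambda> \<psi> (inverse (norm (tensor3 h1 h2 h3 *v \<psi>)) *\<^sub>R (tensor3 h1 h2 h3 *v \<psi>))"
  then obtain Ks where kc: "kraus_complete Ks"
    and inv: "\<forall>(A, B, C) \<in> set Ks. invertible A \<and> invertible B \<and> invertible C"
    and tr: "kraus_map Ks (proj \<psi>) = proj \<beta>"
    unfolding SEP1_def transforms_def \<beta>_def n_def hh_def by blast
  define HH where "HH = tensor3 (Hz a) (Hx a) (Hz a)"
  have HH: "dagger hh ** hh = HH"
    unfolding hh_def HH_def dagger_tensor3 tensor3_mult psd_dagger[OF h1(1)] psd_dagger[OF h2(1)]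
      psd_dagger[OF h3(1)] h1(2) h2(2) h3(2) ..
  obtain x0 where psi: "\<psi> = x0 *s gvec" using psi_form[OF psi_stab] by blast
  have c1: "cinner \<psi> \<psi> = 1" using psi_norm by (simp add: cinner_self)
  have x0: "cnj x0 * x0 = 1/8"
  proof -
    have "cnj x0 * (x0 * 8) = 1" using c1 unfolding psi by (simp add: cinner_scale_left cinner_scale_right cinner_g mult_ac)
    then show ?thesis by (simp add: field_simps)
  qed
  have x0': "x0 * cnj x0 = 1/8" using x0 by (simp add: mult.commute)
  define \<psi>' where "\<psi>' = x0 *s gpvec"
  have c1': "cinner \<psi>' \<psi>' = 1"
    unfolding \<psi>'_def cinner_scale_left cinner_scale_right cinner_g mult.assoc[symmetric] x0' by simp
  have nh: "cinner (hh *v \<psi>) (hh *v \<psi>) = (1 + 8 * of_real a ^ 3) / 8"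
    unfolding Qf_dagger[symmetric] HH psi Qf_smult HH_def Qf_g x0 by simp
  have nh': "cinner (hh *v \<psi>') (hh *v \<psi>') = (1 - 8 * of_real a ^ 3) / 8"
    unfolding Qf_dagger[symmetric] HH \<psi>'_def Qf_smult HH_def Qf_gp x0 by simp
  have n2: "complex_of_real (n^2) = (1 + 8 * of_real a ^ 3) / 8"
    using nh unfolding n_def cinner_self by simp
  have npos: "n \<noteq> 0"
  proof
    assume "n = 0"
    then have "(1 + 8 * complex_of_real a ^ 3) / 8 = 0" using n2 by simp
    then have "complex_of_real (1 + 8 * a^3) = 0" by simp
    then have "1 + 8 * a^3 = 0" by (simp only: of_real_eq_0_iff)
    moreover have "a^3 > 0" using a by simp
    ultimately show False by linarith
  qed
  have nb: "cinner \<beta> \<beta> = 1"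
  proof -
    have "cinner \<beta> \<beta> = cnj (of_real (inverse n)) * of_real (inverse n) * cinner (hh *v \<psi>) (hh *v \<psi>)"
      unfolding \<beta>_def scaleR_smult cinner_scale_left cinner_scale_right by (simp only: mult_ac)
    also have "\<dots> = of_real (inverse n) * of_real (inverse n) * of_real (n^2)"
      unfolding cinner_self n_def by simp
    also have "\<dots> = 1" using npos by (simp add: power2_eq_square field_simps)
    finally show ?thesis .
  qed
  have lam: "(\<lambda>(A,B,C). tensor3 A B C ** proj \<psi> ** dagger (tensor3 A B C)) = (\<lambda>(A,B,C). proj (tensor3 A B C *v \<psi>))"
    by (simp add: proj_conj)
  have out: "sum_list (map (\<lambda>(A,B,C). proj (tensor3 A B C *v \<psi>)) Ks) = proj \<beta>"
    using tr unfolding kraus_map_def lam .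
  have ne: "Ks \<noteq> []" using kc mat8_ne unfolding kraus_complete_def by auto
  define f where "f = (\<lambda>(A,B,C). dagger (tensor3 A B C) ** tensor3 A B C)"
  obtain N1 where N1: "h1 ** N1 = mat 1" "N1 ** h1 = mat 1" using h_inv[OF h1(2) Hz_inv[OF a]] by blast
  obtain N2 where N2: "h2 ** N2 = mat 1" "N2 ** h2 = mat 1" using h_inv[OF h2(2) Hx_inv[OF a]] by blast
  obtain N3 where N3: "h3 ** N3 = mat 1" "N3 ** h3 = mat 1" using h_inv[OF h3(2) Hz_inv[OF a]] by blast
  have NH: "tensor3 N1 N2 N3 ** hh = mat 1" unfolding hh_def tensor3_mult N1(2) N2(2) N3(2) tensor3_id ..
  have per: "\<forall>x\<in>set Ks. 0 < Re (Qf \<psi> (f x) - Qf \<psi>' (f x))"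
  proof
    fix x assume xm: "x \<in> set Ks"
    obtain A B C where x: "x = (A,B,C)" by (cases x)
    have invs: "invertible A" "invertible B" "invertible C" using inv xm x by auto
    obtain A' where A': "A' ** A = mat 1" using invs(1) unfolding invertible_def by blast
    obtain B' where B': "B' ** B = mat 1" using invs(2) unfolding invertible_def by blast
    obtain C' where C': "C' ** C = mat 1" using invs(3) unfolding invertible_def by blast
    define G where "G = tensor3 (N1 ** A) (N2 ** B) (N3 ** C)"
    have K: "tensor3 A B C = hh ** G"
      unfolding hh_def G_def tensor3_mult by (simp add: matrix_mul_assoc N1 N2 N3)
    have m1: "(A' ** h1) ** (N1 ** A) = mat 1" by (metis matrix_mul_assoc matrix_mul_lid N1(1) A')
    have m2: "(B' ** h2) ** (N2 ** B) = mat 1" by (metis matrix_mul_assoc matrix_mul_lid N2(1) B')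
    have m3: "(C' ** h3) ** (N3 ** C) = mat 1" by (metis matrix_mul_assoc matrix_mul_lid N3(1) C')
    have MG: "tensor3 (A' ** h1) (B' ** h2) (C' ** h3) ** G = mat 1"
      unfolding G_def tensor3_mult m1 m2 m3 tensor3_id ..
    define k where "k = cinner \<beta> (tensor3 A B C *v \<psi>)"
    have Kpsi: "tensor3 A B C *v \<psi> = k *s \<beta>" using rank1[OF out nb] xm x k_def by auto
    define c' where "c' = k * of_real (inverse n)"
    have Gpsi: "G *v \<psi> = c' *s \<psi>"
    proof -
      have "G *v \<psi> = (tensor3 N1 N2 N3 ** hh) *v (G *v \<psi>)" by (simp add: NH)
      also have "\<dots> = tensor3 N1 N2 N3 *v (tensor3 A B C *v \<psi>)" by (simp add: K matrix_vector_mul_assoc matrix_mul_assoc)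
      also have "\<dots> = tensor3 N1 N2 N3 *v (c' *s (hh *v \<psi>))" unfolding Kpsi \<beta>_def c'_def scaleR_smult smult_smult ..
      also have "\<dots> = c' *s \<psi>" by (simp add: mv_smult matrix_vector_mul_assoc NH)
      finally show ?thesis .
    qed
    have x0nz: "x0 \<noteq> 0" using x0 by auto
    have Gg: "G *v gvec = c' *s gvec"
      by (rule smult_cancel[OF x0nz]) (use Gpsi in \<open>simp add: psi mv_smult smult_smult mult.commute\<close>)
    have sym: "G *v gpvec = c' *s gpvec \<or> G *v gpvec = (-c') *s gpvec"
      using key_sym[OF m1 m2 m3 Gg[unfolded G_def]] unfolding G_def .
    have Gpsi': "G *v \<psi>' = c' *s \<psi>' \<or> G *v \<psi>' = (-c') *s \<psi>'"
      using sym unfolding \<psi>'_def by (auto simp: mv_smult smult_smult mult.commute)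
    have q1: "Qf \<psi> (f x) = cnj c' * c' * ((1 + 8 * of_real a ^ 3) / 8)"
    proof -
      have "Qf \<psi> (f x) = cinner (hh *v (G *v \<psi>)) (hh *v (G *v \<psi>))"
        unfolding f_def x by (simp add: Qf_dagger K matrix_vector_mul_assoc)
      also have "\<dots> = cnj c' * c' * cinner (hh *v \<psi>) (hh *v \<psi>)"
        unfolding Gpsi mv_smult cinner_scale_left cinner_scale_right by (simp add: mult.assoc)
      finally show ?thesis unfolding nh .
    qed
    have q2: "Qf \<psi>' (f x) = cnj c' * c' * ((1 - 8 * of_real a ^ 3) / 8)"
    proof -
      have "Qf \<psi>' (f x) = cinner (hh *v (G *v \<psi>')) (hh *v (G *v \<psi>'))"
        unfolding f_def x by (simp add: Qf_dagger K matrix_vector_mul_assoc)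
      also have "\<dots> = cnj c' * c' * cinner (hh *v \<psi>') (hh *v \<psi>')"
      proof (cases "G *v \<psi>' = c' *s \<psi>'")
        case True
        show ?thesis unfolding True mv_smult cinner_scale_left cinner_scale_right by (simp add: mult.assoc)
      next
        case False
        then have F: "G *v \<psi>' = (-c') *s \<psi>'" using Gpsi' by blast
        show ?thesis unfolding F mv_smult cinner_scale_left cinner_scale_right by (simp add: mult.assoc)
      qed
      finally show ?thesis unfolding nh' .
    qed
    have c'nz: "c' \<noteq> 0"
    proof
      assume "c' = 0"
      then have "G *v \<psi> = 0" using Gpsi by simp
      then have "tensor3 (A' ** h1) (B' ** h2) (C' ** h3) *v (G *v \<psi>) = 0" by simp
      then have "\<psi> = 0" unfolding matrix_vector_mul_assoc MG by simp
      then show False using c1 by (simp add: cinner_def)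
    qed
    have "Qf \<psi> (f x) - Qf \<psi>' (f x) = cnj c' * c' * (2 * of_real a ^ 3)"
      unfolding q1 q2 by (simp add: field_simps)
    also have "\<dots> = complex_of_real ((cmod c')^2 * (2 * a^3))"
      unfolding of_real_mult complex_norm_square by (simp add: mult_ac)
    finally have "Re (Qf \<psi> (f x) - Qf \<psi>' (f x)) = (cmod c')^2 * (2 * a^3)" by simp
    also have "\<dots> > 0" using c'nz a by simp
    finally show "0 < Re (Qf \<psi> (f x) - Qf \<psi>' (f x))" .
  qed
  have "sum_list (map (\<lambda>x. Qf \<psi> (f x) - Qf \<psi>' (f x)) Ks) = Qf \<psi> (sum_list (map f Ks)) - Qf \<psi>' (sum_list (map f Ks))"
    unfolding sum_list_diff Qf_sum_list ..
  also have "\<dots> = 0" using kc c1 c1' unfolding kraus_complete_def f_def[symmetric] by (simp add: Qf_mat1)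
  finally have "Re (sum_list (map (\<lambda>x. Qf \<psi> (f x) - Qf \<psi>' (f x)) Ks)) = 0" by simp
  then have "sum_list (map (\<lambda>x. Re (Qf \<psi> (f x) - Qf \<psi>' (f x))) Ks) = 0" unfolding Re_sum_list .
  moreover have "0 < sum_list (map (\<lambda>x. Re (Qf \<psi> (f x) - Qf \<psi>' (f x))) Ks)"
    using sum_list_pos[OF ne per] .
  ultimately show False by simp
qed



definition Ym :: mat2 where "Ym = mk2 0 (-\<i>) \<i> 0"
definition kI :: "complex \<Rightarrow> mat2" where "kI k = mk2 k 0 0 k"
definition kY :: "complex \<Rightarrow> mat2" where "kY k = mk2 0 (-\<i>*k) (\<i>*k) 0"
definition P0 :: "complex \<Rightarrow> mat2" where "P0 l = mk2 l 0 0 0"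
definition P1 :: "complex \<Rightarrow> mat2" where "P1 l = mk2 0 0 0 l"
definition Qp :: mat2 where "Qp = mk2 (1/2) (1/2) (1/2) (1/2)"
definition Qm :: mat2 where "Qm = mk2 (1/2) (-1/2) (-1/2) (1/2)"

definition Klist :: "mat2 \<Rightarrow> mat2 \<Rightarrow> mat2 \<Rightarrow> complex \<Rightarrow> complex \<Rightarrow> (mat2 \<times> mat2 \<times> mat2) list" where
  "Klist h1 h2 h3 k l = [(h1 ** kI k, h2, h3), (h1 ** kY k, h2 ** Ym, h3), (h1 ** kI k, h2 ** Ym, h3 ** Ym),
     (h1 ** kY k, h2, h3 ** Ym), (P0 l, Qm, P0 1), (P1 l, Qp, P0 1), (P0 l, Qp, P1 1), (P1 l, Qm, P1 1)]"

lemma blk1: "cnj k = k \<Longrightarrow> k*k = K \<Longrightarrow> dagger (kI k) ** Hz a ** kI k = mk2 (K*(1/2+ of_real a)) 0 0 (K*(1/2 - of_real a))"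
  unfolding kI_def Hz_def mk2_dagger mk2_mult by (simp add: mat2_eq_iff algebra_simps)
lemma blk2: "cnj k = k \<Longrightarrow> k*k = K \<Longrightarrow> dagger (kY k) ** Hz a ** kY k = mk2 (K*(1/2 - of_real a)) 0 0 (K*(1/2+ of_real a))"
  unfolding kY_def Hz_def mk2_dagger mk2_mult by (simp add: mat2_eq_iff algebra_simps)
lemma ii: "\<i> * x * \<i> = - (x::complex)"
proof -
  have "\<i> * x * \<i> = \<i> * (\<i> * x)" by (simp add: mult_ac)
  then show ?thesis by simp
qed

lemma blk3: "dagger Ym ** Hx a ** Ym = mk2 (1/2) (-of_real a) (-of_real a) (1/2)"
  unfolding Ym_def Hx_def mk2_dagger mk2_mult by (simp add: mat2_eq_iff ii)
lemma blk4: "dagger Ym ** Hz a ** Ym = mk2 (1/2 - of_real a) 0 0 (1/2+ of_real a)"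
  unfolding Ym_def Hz_def mk2_dagger mk2_mult by (simp add: mat2_eq_iff ii algebra_simps)
lemma blk5: "cnj l = l \<Longrightarrow> l*l = L \<Longrightarrow> dagger (P0 l) ** P0 l = mk2 L 0 0 0"
  unfolding P0_def mk2_dagger mk2_mult by (simp add: mat2_eq_iff)
lemma blk6: "cnj l = l \<Longrightarrow> l*l = L \<Longrightarrow> dagger (P1 l) ** P1 l = mk2 0 0 0 L"
  unfolding P1_def mk2_dagger mk2_mult by (simp add: mat2_eq_iff)
lemma blk7: "dagger Qp ** Qp = Qp" "dagger Qm ** Qm = Qm"
  unfolding Qp_def Qm_def mk2_dagger mk2_mult by (simp_all add: mat2_eq_iff)

lemma herm_sq: "dagger h = h \<Longrightarrow> dagger (h ** M) ** (h ** M) = dagger M ** (h ** h) ** M"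
  by (simp add: dagger_mult matrix_mul_assoc)

lemma big_sum:
  assumes K: "K * (1 + 8 * of_real a ^ 3) = 2" and L: "L = 8 * of_real a ^ 3 * K"
  shows "tensor3 (mk2 (K*(1/2+ of_real a)) 0 0 (K*(1/2 - of_real a))) (Hx a) (Hz a)
       + tensor3 (mk2 (K*(1/2 - of_real a)) 0 0 (K*(1/2+ of_real a))) (mk2 (1/2) (-of_real a) (-of_real a) (1/2)) (Hz a)
       + tensor3 (mk2 (K*(1/2+ of_real a)) 0 0 (K*(1/2 - of_real a))) (mk2 (1/2) (-of_real a) (-of_real a) (1/2)) (mk2 (1/2 - of_real a) 0 0 (1/2+ of_real a))
       + tensor3 (mk2 (K*(1/2 - of_real a)) 0 0 (K*(1/2+ of_real a))) (Hx a) (mk2 (1/2 - of_real a) 0 0 (1/2+ of_real a))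
       + tensor3 (mk2 L 0 0 0) Qm (mk2 1 0 0 0) + tensor3 (mk2 0 0 0 L) Qp (mk2 1 0 0 0)
       + tensor3 (mk2 L 0 0 0) Qp (mk2 0 0 0 1) + tensor3 (mk2 0 0 0 L) Qm (mk2 0 0 0 1) = mat 1"
proof -
  have K2: "K / 2 + K * (4 * of_real a ^ 3) = 1" using K by (simp add: field_simps)
  show ?thesis
  unfolding vec_eq_iff all_idx3 Hx_def Hz_def Qp_def Qm_def
  by (simp add: tensor3_nth mat_def L algebra_simps power3_eq_cube) (use K2 in \<open>simp_all add: algebra_simps power3_eq_cube\<close>)
qed



lemma proj4:
  assumes "4 * (k * cnj k) = complex_of_real (r^2)"
  shows "proj (k *s w) + proj (k *s w) + proj (k *s w) + proj (k *s w) = proj (r *\<^sub>R w)"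
proof -
  have "w$i * cnj (w$j) * (4 * (k * cnj k)) = w$i * cnj (w$j) * complex_of_real (r^2)" for i j
    using assms by simp
  then show ?thesis unfolding proj_def
    unfolding scaleR_smult by (simp add: vec_eq_iff power2_eq_square algebra_simps)
qed

lemma proj_zero: "proj 0 = 0"
  unfolding proj_def by (simp add: vec_eq_iff)

lemma ii2: "x * \<i> * \<i> = - (x::complex)"
  by (simp add: mult.assoc)

lemma S1g: "tensor3 (kI k) (mat 1) (mat 1) *v gvec = k *s gvec"
  unfolding kI_def mat1_mk2 gvec_def tensor3_v8 by (simp add: vec8_eq_iff ii ii2)
lemma S2g: "tensor3 (kY k) Ym (mat 1) *v gvec = k *s gvec"
  unfolding kY_def Ym_def mat1_mk2 gvec_def tensor3_v8 by (simp add: vec8_eq_iff ii ii2)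
lemma S3g: "tensor3 (kI k) Ym Ym *v gvec = k *s gvec"
  unfolding kI_def Ym_def mat1_mk2 gvec_def tensor3_v8 by (simp add: vec8_eq_iff ii ii2)
lemma S4g: "tensor3 (kY k) (mat 1) Ym *v gvec = k *s gvec"
  unfolding kY_def Ym_def mat1_mk2 gvec_def tensor3_v8 by (simp add: vec8_eq_iff ii ii2)
lemma S5g: "tensor3 (P0 l) Qm (P0 1) *v gvec = 0" "tensor3 (P1 l) Qp (P0 1) *v gvec = 0"
  "tensor3 (P0 l) Qp (P1 1) *v gvec = 0" "tensor3 (P1 l) Qm (P1 1) *v gvec = 0"
  unfolding P0_def P1_def Qp_def Qm_def gvec_def tensor3_v8 by (simp_all add: vec8_eq_iff)

lemma factor: "tensor3 (h1 ** A) (h2 ** B) (h3 ** C) *v v = tensor3 h1 h2 h3 *v (tensor3 A B C *v v)"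
  by (simp add: matrix_vector_mul_assoc tensor3_mult)



lemma factor_v:
  "tensor3 (h1 ** A) h2 h3 *v v = tensor3 h1 h2 h3 *v (tensor3 A (mat 1) (mat 1) *v v)"
  "tensor3 (h1 ** A) (h2 ** B) h3 *v v = tensor3 h1 h2 h3 *v (tensor3 A B (mat 1) *v v)"
  "tensor3 (h1 ** A) h2 (h3 ** C) *v v = tensor3 h1 h2 h3 *v (tensor3 A (mat 1) C *v v)"
  "tensor3 (h1 ** A) (h2 ** B) (h3 ** C) *v v = tensor3 h1 h2 h3 *v (tensor3 A B C *v v)"
  by (simp_all add: matrix_vector_mul_assoc tensor3_mult)

lemma sep_exists:
  fixes a :: real and \<psi> :: vec8 and h1 h2 h3 :: mat2
  assumes a: "0 < a" "a < 1/2"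
    and psi_norm: "norm \<psi> = 1"
    and psi_stab: "\<forall>i\<in>{1,2,3}. stabA i *v \<psi> = \<psi>"
    and h1: "psd h1" "h1 ** h1 = Hz a"
    and h2: "psd h2" "h2 ** h2 = Hx a"
    and h3: "psd h3" "h3 ** h3 = Hz a"
  shows "\<exists>\<Lambda>. SEP \<Lambda> \<and> transforms \<Lambda> \<psi>
            (inverse (norm (tensor3 h1 h2 h3 *v \<psi>)) *\<^sub>R (tensor3 h1 h2 h3 *v \<psi>))"
proof -
  define hh where "hh = tensor3 h1 h2 h3"
  define n where "n = norm (hh *v \<psi>)"
  define D where "D = 1 + 8 * a^3"
  have Dpos: "D > 0" unfolding D_def using a by (simp add: add_pos_nonneg)
  define k where "k = complex_of_real (sqrt (2 / D))"
  define l where "l = complex_of_real (sqrt (16 * a^3 / D))"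
  define K where "K = complex_of_real (2 / D)"
  define L where "L = complex_of_real (16 * a^3 / D)"
  have ck: "cnj k = k" and cl: "cnj l = l" unfolding k_def l_def by simp_all
  have kk: "k * k = K" unfolding k_def K_def of_real_mult[symmetric] real_sqrt_mult_self using Dpos by simp
  have ll: "l * l = L" unfolding l_def L_def of_real_mult[symmetric] real_sqrt_mult_self using Dpos a by simp
  have KD: "K * (1 + 8 * of_real a ^ 3) = 2"
  proof -
    have "K * (1 + 8 * of_real a ^ 3) = complex_of_real (2 / D * D)" unfolding K_def D_def by simp
    then show ?thesis using Dpos by simp
  qed
  have LK: "L = 8 * of_real a ^ 3 * K" unfolding L_def K_def by simp
  have hd1: "dagger h1 = h1" and hd2: "dagger h2 = h2" and hd3: "dagger h3 = h3"
    using psd_dagger h1(1) h2(1) h3(1) by blast+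
  define Ks where "Ks = Klist h1 h2 h3 k l"
  have sq1: "dagger h1 ** h1 = Hz a" using hd1 h1(2) by simp
  have sq2: "dagger h2 ** h2 = Hx a" using hd2 h2(2) by simp
  have sq3: "dagger h3 ** h3 = Hz a" using hd3 h3(2) by simp
  have complete: "kraus_complete Ks"
  proof -
    have "sum_list (map (\<lambda>(A, B, C). dagger (tensor3 A B C) ** tensor3 A B C) Ks) =
       tensor3 (mk2 (K*(1/2 + of_real a)) 0 0 (K*(1/2 - of_real a))) (Hx a) (Hz a)
       + tensor3 (mk2 (K*(1/2 - of_real a)) 0 0 (K*(1/2 + of_real a))) (mk2 (1/2) (-of_real a) (-of_real a) (1/2)) (Hz a)
       + tensor3 (mk2 (K*(1/2 + of_real a)) 0 0 (K*(1/2 - of_real a))) (mk2 (1/2) (-of_real a) (-of_real a) (1/2)) (mk2 (1/2 - of_real a) 0 0 (1/2 + of_real a))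
       + tensor3 (mk2 (K*(1/2 - of_real a)) 0 0 (K*(1/2 + of_real a))) (Hx a) (mk2 (1/2 - of_real a) 0 0 (1/2 + of_real a))
       + tensor3 (mk2 L 0 0 0) Qm (mk2 1 0 0 0) + tensor3 (mk2 0 0 0 L) Qp (mk2 1 0 0 0)
       + tensor3 (mk2 L 0 0 0) Qp (mk2 0 0 0 1) + tensor3 (mk2 0 0 0 L) Qm (mk2 0 0 0 1)"
      unfolding Ks_def Klist_def
      by (simp add: dagger_tensor3 tensor3_mult herm_sq[OF hd1] herm_sq[OF hd2] herm_sq[OF hd3]
          h1(2) h2(2) h3(2) sq1 sq2 sq3 blk1[OF ck kk] blk2[OF ck kk] blk3 blk4 blk5[OF cl ll] blk6[OF cl ll]
          blk5[of 1 1, simplified] blk6[of 1 1, simplified] blk7 add.assoc)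
    also have "\<dots> = mat 1" by (rule big_sum[OF KD LK])
    finally show ?thesis unfolding kraus_complete_def .
  qed
  obtain x0 where psi: "\<psi> = x0 *s gvec" using psi_form[OF psi_stab] by blast
  have o1: "tensor3 (h1 ** kI k) h2 h3 *v \<psi> = k *s (hh *v \<psi>)"
    unfolding factor_v(1) hh_def psi mv_smult S1g by (simp add: smult_smult mult.commute)
  have o2: "tensor3 (h1 ** kY k) (h2 ** Ym) h3 *v \<psi> = k *s (hh *v \<psi>)"
    unfolding factor_v(2) hh_def psi mv_smult S2g by (simp add: smult_smult mult.commute)
  have o3: "tensor3 (h1 ** kI k) (h2 ** Ym) (h3 ** Ym) *v \<psi> = k *s (hh *v \<psi>)"
    unfolding factor_v(4) hh_def psi mv_smult S3g by (simp add: smult_smult mult.commute)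
  have o4: "tensor3 (h1 ** kY k) h2 (h3 ** Ym) *v \<psi> = k *s (hh *v \<psi>)"
    unfolding factor_v(3) hh_def psi mv_smult S4g by (simp add: smult_smult mult.commute)
  have o5: "tensor3 (P0 l) Qm (P0 1) *v \<psi> = 0" "tensor3 (P1 l) Qp (P0 1) *v \<psi> = 0"
    "tensor3 (P0 l) Qp (P1 1) *v \<psi> = 0" "tensor3 (P1 l) Qm (P1 1) *v \<psi> = 0"
    unfolding psi mv_smult S5g by simp_all
  have lam: "(\<lambda>(A,B,C). tensor3 A B C ** proj \<psi> ** dagger (tensor3 A B C)) = (\<lambda>(A,B,C). proj (tensor3 A B C *v \<psi>))"
    by (simp add: proj_conj)
  have out: "kraus_map Ks (proj \<psi>) = proj (k *s (hh *v \<psi>)) + proj (k *s (hh *v \<psi>)) + proj (k *s (hh *v \<psi>)) + proj (k *s (hh *v \<psi>))"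
    unfolding kraus_map_def lam Ks_def Klist_def by (simp add: o1 o2 o3 o4 o5 proj_zero add.assoc)
  define HH where "HH = tensor3 (Hz a) (Hx a) (Hz a)"
  have HH: "dagger hh ** hh = HH"
    unfolding hh_def HH_def dagger_tensor3 tensor3_mult hd1 hd2 hd3 h1(2) h2(2) h3(2) ..
  have c1: "cinner \<psi> \<psi> = 1" using psi_norm by (simp add: cinner_self)
  have x0: "cnj x0 * x0 = 1/8"
  proof -
    have "cnj x0 * (x0 * 8) = 1" using c1 unfolding psi by (simp add: cinner_scale_left cinner_scale_right cinner_g mult_ac)
    then show ?thesis by (simp add: field_simps)
  qed
  have nh: "cinner (hh *v \<psi>) (hh *v \<psi>) = (1 + 8 * of_real a ^ 3) / 8"
    unfolding Qf_dagger[symmetric] HH psi Qf_smult HH_def Qf_g x0 by simp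
  have n2: "complex_of_real (n^2) = (1 + 8 * of_real a ^ 3) / 8"
    using nh unfolding n_def cinner_self by simp
  have n2r: "n^2 = D / 8"
  proof -
    have "complex_of_real (n^2) = complex_of_real (D/8)" unfolding n2 D_def by simp
    then show ?thesis by (simp only: of_real_eq_iff)
  qed
  have kn: "4 * (k * cnj k) = complex_of_real ((inverse n)^2)"
  proof -
    have "(inverse n)^2 = inverse (D/8)" unfolding power_inverse n2r ..
    also have "\<dots> = 8 / D" by simp
    finally have "(inverse n)^2 = 8 / D" .
    then show ?thesis unfolding ck kk K_def by simp
  qed
  have "kraus_map Ks (proj \<psi>) = proj (inverse n *\<^sub>R (hh *v \<psi>))"
    unfolding out by (rule proj4[OF kn])
  then show ?thesis unfolding SEP_def transforms_def n_def hh_def using complete by blast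
qed


theorem mainTheorem5:
  fixes a :: real and \<psi> :: vec8 and h1 h2 h3 :: mat2
  assumes a: "0 < a" "a < 1/2"
    and psi_norm: "norm \<psi> = 1"
    and psi_stab: "\<forall>i\<in>{1,2,3}. stabA i *v \<psi> = \<psi>"
    and h1: "psd h1" "h1 ** h1 = (1/2) *\<^sub>R mat 1 + a *\<^sub>R pauliZ"
    and h2: "psd h2" "h2 ** h2 = (1/2) *\<^sub>R mat 1 + a *\<^sub>R pauliX"
    and h3: "psd h3" "h3 ** h3 = (1/2) *\<^sub>R mat 1 + a *\<^sub>R pauliZ"
  shows "(\<exists>\<Lambda>. SEP \<Lambda> \<and> transforms \<Lambda> \<psi>
            (inverse (norm (tensor3 h1 h2 h3 *v \<psi>)) *\<^sub>R (tensor3 h1 h2 h3 *v \<psi>)))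
       \<and> \<not> (\<exists>\<Lambda>. SEP1 \<Lambda> \<and> transforms \<Lambda> \<psi>
            (inverse (norm (tensor3 h1 h2 h3 *v \<psi>)) *\<^sub>R (tensor3 h1 h2 h3 *v \<psi>)))"
proof
  have h1': "h1 ** h1 = Hz a" using h1(2) Hz_eq by simp
  have h2': "h2 ** h2 = Hx a" using h2(2) Hx_eq by simp
  have h3': "h3 ** h3 = Hz a" using h3(2) Hz_eq by simp
  show "\<exists>\<Lambda>. SEP \<Lambda> \<and> transforms \<Lambda> \<psi>
            (inverse (norm (tensor3 h1 h2 h3 *v \<psi>)) *\<^sub>R (tensor3 h1 h2 h3 *v \<psi>))"
    by (rule sep_exists[OF a psi_norm psi_stab h1(1) h1' h2(1) h2' h3(1) h3'])
  show "\<not> (\<exists>\<Lambda>. SEP1 \<Lambda> \<and> transforms \<Lambda> \<psi>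
            (inverse (norm (tensor3 h1 h2 h3 *v \<psi>)) *\<^sub>R (tensor3 h1 h2 h3 *v \<psi>)))"
    using h1' h2' h3' by (rule not_sep1[OF a psi_norm psi_stab h1(1) _ h2(1) _ h3(1)])
qed

end
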